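(* Let $T\in\mathcal{GT}_k(n)$, $k\ge1$, and $i\in\{1,\dots,n\}$. Then $f_i\,\omega(T)$ is defined if and only if $i=q_j(T)$ for some $1\le j\le k$.
   Context: Type $C$ setting: $C_n=\{1<\cdots<n<\overline n<\cdots<\overline1\}$ with crystal graph $1\xrightarrow{1}2\xrightarrow{2}\cdots\xrightarrow{n-1}n\xrightarrow{n}\overline n\xrightarrow{n-1}\cdots\xrightarrow{1}\overline1$; Kashiwara operators act on $C_n^*$ by the tensor product rule. A column is a strictly increasing word; $N_z(u)$ counts letters $x\le z$ or $x\ge\overline z$; admissible columns are nonempty columns with $N_z(u)\le z$ for all $z$. $\mathrm{ACol}(C_n)$ is the set of admissible columns plus $\epsilon$; $p$ erases $\epsilon$; $f_iw$ is defined for $w\in\mathrm{ACol}(C_n)^*$ iff $f_ip(w)$ is defined. Blocks: $\mathfrak{c}(m)=12\cdots m$; $\mathfrak{c}(a,b)=(a+1)\cdots(a+b)$; $\mathfrak{c}(\overline a,c)=\overline a\cdots\overline{a-c+1}$ (empty when $b=0$ resp. $c=0$). $C$-trees: vertices $i$ ($i\ge1$), $im$, $im^-$ ($i,m\ge1$); $i$ has level $i$, $im,im^-$ level $i+m$; strand $i$ ordered $i<i1<i1^-<i2<\cdots$. A labelling of rank $k$ is $s$ from vertices of level $\le k$ to $\mathbb N$; valuation $q(v)=s(i)+\sum_{im\le v}s(im)-\sum_{im^-\le v}s(im^-)$ for $v$ on strand $i$; $n$-labelling if $0\le q\le n$. $\rho(i)=\mathfrak{c}(s(i))$; $\rho(im)=\mathfrak{c}(q(v'),s(im))$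 with $v'$ the predecessor of $im$ on its strand; $\rho(im^-)=\mathfrak{c}(\overline{q(im)},s(im^-))$. $\omega_t=\rho(t)\rho((t-1)1)\cdots\rho(1(t-1))\rho(1(t-1)^-)\cdots\rho((t-1)1^-)$, or $\epsilon$ if empty. $\mathcal{GT}_k(n)$: $n$-labellings of rank $k$ with each $\omega_t$ equal to $\epsilon$ or an admissible column; $\omega(T)=\omega_1\cdots\omega_k$. $q_j(T)=q(j(k-j)^-)$ for $1\le j\le k-1$ and $q_k(T)=s(k)$. *)

theory Defs
  imports Main
begin

text \<open>Letters of C_n are encoded as integers: the letter j (1 \<le> j \<le> n) is the
  integer j, the barred letter (overline j) is the integer -j.\<close>

definition letterC :: "nat \<Rightarrow> int \<Rightarrow> bool" where
  "letterC n x \<longleftrightarrow> (1 \<le> x \<and> x \<le> int n) \<or> (- int n \<le> x \<and> x \<le> -1)"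

text \<open>Position of a letter in the total order 1 < ... < n < bar n < ... < bar 1.\<close>
definition cidx :: "nat \<Rightarrow> int \<Rightarrow> int" where
  "cidx n x = (if x > 0 then x else 2 * int n + 1 + x)"

definition cless :: "nat \<Rightarrow> int \<Rightarrow> int \<Rightarrow> bool" where
  "cless n x y \<longleftrightarrow> cidx n x < cidx n y"

text \<open>Letters on which f_i acts (they contribute a + to the i-signature) and letters
  on which e_i acts (they contribute a -).\<close>
definition fplus :: "nat \<Rightarrow> nat \<Rightarrow> int \<Rightarrow> bool" where
  "fplus n i x \<longleftrightarrow> x = int i \<or> (i < n \<and> x = - (int i + 1))"

definition eminus :: "nat \<Rightarrow> nat \<Rightarrow> int \<Rightarrow> bool" where
  "eminus n i x \<longleftrightarrow> (i < n \<and> x = int i + 1) \<or> x = - int i"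

text \<open>Action of f_i on a single letter (only used on letters with fplus).\<close>
definition fletter :: "nat \<Rightarrow> nat \<Rightarrow> int \<Rightarrow> int" where
  "fletter n i x = (if i < n then x + 1 else - x)"

text \<open>Scan the word left to right; the stack holds the positions of the still unmatched
  + letters; a - letter cancels the nearest unmatched + to its left (cancellation of
  factors +-).  The result is the list of positions of the unmatched + letters
  (most recent first).\<close>
fun unmatched_plus :: "nat \<Rightarrow> nat \<Rightarrow> nat list \<Rightarrow> nat \<Rightarrow> int list \<Rightarrow> nat list" where
  "unmatched_plus n i st p [] = st"
| "unmatched_plus n i st p (x # xs) =
     (if fplus n i x then unmatched_plus n i (p # st) (Suc p) xs
      else if eminus n i x then unmatched_plus n i (drop 1 st) (Suc p) xs
      else unmatched_plus n i st (Suc p) xs)"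

text \<open>f_i acts on the leftmost unmatched +; it is undefined (None) if there is none.\<close>
definition fC :: "nat \<Rightarrow> nat \<Rightarrow> int list \<Rightarrow> int list option" where
  "fC n i w = (case unmatched_plus n i [] 0 w of
       [] \<Rightarrow> None
     | st \<Rightarrow> Some (w[last st := fletter n i (w ! last st)]))"

definition column :: "nat \<Rightarrow> int list \<Rightarrow> bool" where
  "column n u \<longleftrightarrow> (\<forall>x\<in>set u. letterC n x) \<and> sorted_wrt (cless n) u"

definition Ncount :: "nat \<Rightarrow> int list \<Rightarrow> nat" where
  "Ncount z u = length (filter (\<lambda>x. (0 < x \<and> x \<le> int z) \<or> (x < 0 \<and> - x \<le> int z)) u)"

definition admissible :: "nat \<Rightarrow> int list \<Rightarrow> bool" where
  "admissible n u \<longleftrightarrow> u \<noteq> [] \<and> column n u \<and> (\<forall>z\<in>{1..n}. Ncount z u \<le> z)"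

datatype acol = Eps | Col "int list"

definition pACol :: "acol list \<Rightarrow> int list" where
  "pACol ws = concat (map (\<lambda>c. case c of Eps \<Rightarrow> [] | Col u \<Rightarrow> u) ws)"

definition fACol_defined :: "nat \<Rightarrow> nat \<Rightarrow> acol list \<Rightarrow> bool" where
  "fACol_defined n i ws \<longleftrightarrow> fC n i (pACol ws) \<noteq> None"

definition cblock :: "nat \<Rightarrow> int list" where
  "cblock m = map int [1..<m+1]"

definition cblock2 :: "int \<Rightarrow> nat \<Rightarrow> int list" where
  "cblock2 a b = map (\<lambda>j. a + int j) [1..<b+1]"

definition cbar :: "int \<Rightarrow> nat \<Rightarrow> int list" where
  "cbar a c = map (\<lambda>j. - (a - int j)) [0..<c]"

text \<open>Vertices: Rt i = i, Pl i m = im, Mi i m = im^-.\<close>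
datatype vtx = Rt nat | Pl nat nat | Mi nat nat

fun valid_vtx :: "vtx \<Rightarrow> bool" where
  "valid_vtx (Rt i) = (1 \<le> i)"
| "valid_vtx (Pl i m) = (1 \<le> i \<and> 1 \<le> m)"
| "valid_vtx (Mi i m) = (1 \<le> i \<and> 1 \<le> m)"

fun level :: "vtx \<Rightarrow> nat" where
  "level (Rt i) = i"
| "level (Pl i m) = i + m"
| "level (Mi i m) = i + m"

text \<open>A labelling s of rank k is represented by a total function; only its values on
  the valid vertices of level \<le> k are ever used.  Valuation q(v):\<close>
fun qv :: "(vtx \<Rightarrow> nat) \<Rightarrow> vtx \<Rightarrow> int" where
  "qv s (Rt i) = int (s (Rt i))"
| "qv s (Pl i m) = int (s (Rt i)) + (\<Sum>m'\<in>{1..m}. int (s (Pl i m')))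
                                  - (\<Sum>m'\<in>{1..<m}. int (s (Mi i m')))"
| "qv s (Mi i m) = int (s (Rt i)) + (\<Sum>m'\<in>{1..m}. int (s (Pl i m')))
                                  - (\<Sum>m'\<in>{1..m}. int (s (Mi i m')))"

definition n_labelling :: "nat \<Rightarrow> nat \<Rightarrow> (vtx \<Rightarrow> nat) \<Rightarrow> bool" where
  "n_labelling n k s \<longleftrightarrow>
     (\<forall>v. valid_vtx v \<and> level v \<le> k \<longrightarrow> 0 \<le> qv s v \<and> qv s v \<le> int n)"

fun rho :: "(vtx \<Rightarrow> nat) \<Rightarrow> vtx \<Rightarrow> int list" where
  "rho s (Rt i) = cblock (s (Rt i))"
| "rho s (Pl i m) = cblock2 (qv s (if m = 1 then Rt i else Mi i (m - 1))) (s (Pl i m))"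
| "rho s (Mi i m) = cbar (qv s (Pl i m)) (s (Mi i m))"

definition omega_word :: "(vtx \<Rightarrow> nat) \<Rightarrow> nat \<Rightarrow> int list" where
  "omega_word s t = rho s (Rt t)
      @ concat (map (\<lambda>j. rho s (Pl j (t - j))) (rev [1..<t]))
      @ concat (map (\<lambda>j. rho s (Mi j (t - j))) [1..<t])"

definition omega_t :: "(vtx \<Rightarrow> nat) \<Rightarrow> nat \<Rightarrow> acol" where
  "omega_t s t = (if omega_word s t = [] then Eps else Col (omega_word s t))"

definition GT :: "nat \<Rightarrow> nat \<Rightarrow> (vtx \<Rightarrow> nat) set" where
  "GT k n = {s. n_labelling n k s \<and>
              (\<forall>t\<in>{1..k}. omega_word s t = [] \<or> admissible n (omega_word s t))}"

definition omega :: "nat \<Rightarrow> (vtx \<Rightarrow> nat) \<Rightarrow> acol list" where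
  "omega k s = map (omega_t s) [1..<k+1]"

definition qj :: "nat \<Rightarrow> (vtx \<Rightarrow> nat) \<Rightarrow> nat \<Rightarrow> int" where
  "qj k s j = (if j = k then int (s (Rt k)) else qv s (Mi j (k - j)))"

end

theory Submission
  imports Defs
begin

fun Lf :: "nat \<Rightarrow> nat \<Rightarrow> nat \<Rightarrow> int list \<Rightarrow> nat" where
  "Lf n i l [] = l"
| "Lf n i l (x # xs) = Lf n i (if fplus n i x then Suc l else if eminus n i x then l - 1 else l) xs"

lemma Lf_append: "Lf n i l (xs @ ys) = Lf n i (Lf n i l xs) ys"
  by (induction xs arbitrary: l) auto

lemma Lf_snoc: "Lf n i l (xs @ [x]) =
   (let v = Lf n i l xs in if fplus n i x then Suc v else if eminus n i x then v - 1 else v)"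
  by (simp add: Lf_append Let_def)

lemma len_unmatched: "length (unmatched_plus n i st p w) = Lf n i (length st) w"
  by (induction w arbitrary: st p) auto

lemma fC_defined: "fC n i w \<noteq> None \<longleftrightarrow> Lf n i 0 w > 0"
proof -
  have "fC n i w \<noteq> None \<longleftrightarrow> unmatched_plus n i [] 0 w \<noteq> []"
    unfolding fC_def by (auto split: list.splits)
  also have "\<dots> \<longleftrightarrow> Lf n i 0 w > 0"
    using len_unmatched[of n i "[]" 0 w] by (metis length_0_conv list.size(3) neq0_conv)
  finally show ?thesis .
qed

lemma cblock2_Suc: "cblock2 x (Suc b) = cblock2 x b @ [x + int (Suc b)]"
  unfolding cblock2_def by simp

lemma cbar_Suc: "cbar y (Suc c) = cbar y c @ [- (y - int c)]"
  unfolding cbar_def by simp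

lemma Lf_cblock2:
  assumes "0 \<le> x" "x + int b \<le> int n" "of_bool (x = int i) \<le> l" "1 \<le> i"
  shows "Lf n i l (cblock2 x b) = l - of_bool (x = int i) + of_bool (x + int b = int i)"
  using assms
proof (induction b)
  case 0
  then show ?case by (simp add: cblock2_def)
next
  case (Suc b)
  have IH: "Lf n i l (cblock2 x b) = l - of_bool (x = int i) + of_bool (x + int b = int i)"
    using Suc by simp
  show ?case
    unfolding cblock2_Suc Lf_snoc Let_def IH
    using Suc.prems by (auto simp: fplus_def eminus_def)
qed

lemma Lf_cbar:
  assumes "y \<le> int n" "0 \<le> y - int c" "of_bool (y = int i) \<le> l" "1 \<le> i"
  shows "Lf n i l (cbar y c) = l - of_bool (y = int i) + of_bool (y - int c = int i)"
  using assms
proof (induction c)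
  case 0
  then show ?case by (simp add: cbar_def)
next
  case (Suc c)
  have IH: "Lf n i l (cbar y c) = l - of_bool (y = int i) + of_bool (y - int c = int i)"
    using Suc by simp
  show ?case
    unfolding cbar_Suc Lf_snoc Let_def IH
    using Suc.prems by (auto simp: fplus_def eminus_def)
qed


lemma Lf_U:
  assumes "\<forall>j\<in>set js. 0 \<le> X j \<and> X j + int (b j) \<le> int n" "1 \<le> i"
  shows "Lf n i (c + sum_list (map (\<lambda>j. of_bool (X j = int i)) js))
            (concat (map (\<lambda>j. cblock2 (X j) (b j)) js))
         = c + sum_list (map (\<lambda>j. of_bool (X j + int (b j) = int i)) js)"
  using assms(1)
proof (induction js arbitrary: c)
  case Nil
  then show ?case by simp
next
  case (Cons j js)
  let ?S = "sum_list (map (\<lambda>j. of_bool (X j = int i)) js)"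
  have "Lf n i (c + ?S + of_bool (X j = int i)) (cblock2 (X j) (b j))
        = c + ?S + of_bool (X j + int (b j) = int i)"
    using Lf_cblock2[of "X j" "b j" n i "c + ?S + of_bool (X j = int i)"] Cons.prems assms(2)
    by simp
  then have "Lf n i (c + sum_list (map (\<lambda>j. of_bool (X j = int i)) (j # js))) (cblock2 (X j) (b j))
        = (c + of_bool (X j + int (b j) = int i)) + ?S"
    by (simp add: ac_simps)
  then show ?case using Cons.IH[of "c + of_bool (X j + int (b j) = int i)"] Cons.prems
    by (simp add: Lf_append ac_simps)
qed

lemma Lf_B:
  assumes "\<forall>j\<in>set js. Y j \<le> int n \<and> 0 \<le> Y j - int (cc j)" "1 \<le> i"
  shows "Lf n i (c + sum_list (map (\<lambda>j. of_bool (Y j = int i)) js))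
            (concat (map (\<lambda>j. cbar (Y j) (cc j)) js))
         = c + sum_list (map (\<lambda>j. of_bool (Y j - int (cc j) = int i)) js)"
  using assms(1)
proof (induction js arbitrary: c)
  case Nil
  then show ?case by simp
next
  case (Cons j js)
  let ?S = "sum_list (map (\<lambda>j. of_bool (Y j = int i)) js)"
  have "Lf n i (c + ?S + of_bool (Y j = int i)) (cbar (Y j) (cc j))
        = c + ?S + of_bool (Y j - int (cc j) = int i)"
    using Lf_cbar[of "Y j" n "cc j" i "c + ?S + of_bool (Y j = int i)"] Cons.prems assms(2)
    by simp
  then have "Lf n i (c + sum_list (map (\<lambda>j. of_bool (Y j = int i)) (j # js))) (cbar (Y j) (cc j))
        = (c + of_bool (Y j - int (cc j) = int i)) + ?S"
    by (simp add: ac_simps)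
  then show ?case using Cons.IH[of "c + of_bool (Y j - int (cc j) = int i)"] Cons.prems
    by (simp add: Lf_append ac_simps)
qed

lemma sum_list_rev_nat: "sum_list (map (f :: 'a \<Rightarrow> nat) (rev xs)) = sum_list (map f xs)"
  by (induction xs) auto

lemma qv_Pl: "1 \<le> m \<Longrightarrow> qv s (Pl j m) = qv s (if m = 1 then Rt j else Mi j (m - 1)) + int (s (Pl j m))"
proof (cases m)
  case (Suc m')
  assume "1 \<le> m"
  show ?thesis
  proof (cases "m' = 0")
    case True then show ?thesis using Suc by simp
  next
    case False
    then show ?thesis using Suc
      by (simp add: sum.cl_ivl_Suc atLeastLessThanSuc_atLeastAtMost)
  qed
qed simp

lemma qv_Mi: assumes "1 \<le> m" shows "qv s (Mi j m) = qv s (Pl j m) - int (s (Mi j m))"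
proof -
  obtain m' where "m = Suc m'" using assms by (cases m) auto
  then show ?thesis by (simp add: sum.cl_ivl_Suc atLeastLessThanSuc_atLeastAtMost)
qed

definition Aq :: "(vtx \<Rightarrow> nat) \<Rightarrow> nat \<Rightarrow> nat \<Rightarrow> int" where
  "Aq T t j = qv T (if j = t then Rt t else Mi j (t - j))"

definition Bq :: "(vtx \<Rightarrow> nat) \<Rightarrow> nat \<Rightarrow> nat \<Rightarrow> nat" where
  "Bq T i t = sum_list (map (\<lambda>j. of_bool (Aq T t j = int i)) [1..<t+1])"

lemma lab_bounds:
  assumes "n_labelling n k T" "valid_vtx v" "level v \<le> k"
  shows "0 \<le> qv T v" "qv T v \<le> int n"
  using assms unfolding n_labelling_def by auto

lemma column_step:
  assumes lab: "n_labelling n k T" and t: "1 \<le> t" "t \<le> k" and i: "1 \<le> i"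
  shows "Lf n i (Bq T i (t - 1)) (omega_word T t) = Bq T i t"
proof -
  define m where "m = T (Rt t)"
  define X where "X j = Aq T (t - 1) j" for j
  define b where "b j = T (Pl j (t - j))" for j
  define Y where "Y j = qv T (Pl j (t - j))" for j
  define cc where "cc j = T (Mi j (t - j))" for j
  define Z where "Z j = qv T (Mi j (t - j))" for j
  have r1: "rho T (Rt t) = cblock2 0 m"
    by (simp add: m_def cblock_def cblock2_def)
  have r2: "map (\<lambda>j. rho T (Pl j (t - j))) (rev [1..<t]) = map (\<lambda>j. cblock2 (X j) (b j)) (rev [1..<t])"
  proof (rule map_cong[OF refl])
    fix j assume "j \<in> set (rev [1..<t])"
    then have j: "1 \<le> j" "j < t" by auto
    have "(if t - j = 1 then Rt j else Mi j (t - j - 1)) = (if j = t - 1 then Rt (t - 1) else Mi j (t - 1 - j))"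
      using j by auto
    then show "rho T (Pl j (t - j)) = cblock2 (X j) (b j)"
      by (simp add: X_def b_def Aq_def)
  qed
  have r3: "map (\<lambda>j. rho T (Mi j (t - j))) [1..<t] = map (\<lambda>j. cbar (Y j) (cc j)) [1..<t]"
    by (simp add: Y_def cc_def)
  have ow: "omega_word T t = cblock2 0 m @ concat (map (\<lambda>j. cblock2 (X j) (b j)) (rev [1..<t]))
      @ concat (map (\<lambda>j. cbar (Y j) (cc j)) [1..<t])"
    unfolding omega_word_def r1 r2 r3 ..
  have mn: "int m \<le> int n"
    using lab_bounds(2)[OF lab, of "Rt t"] t by (simp add: m_def)
  have XY: "X j + int (b j) = Y j" if "j \<in> set [1..<t]" for j
  proof -
    have j: "1 \<le> j" "j < t" using that by auto
    have "(if t - j = 1 then Rt j else Mi j (t - j - 1)) = (if j = t - 1 then Rt (t - 1) else Mi j (t - 1 - j))"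
      using j by auto
    then show ?thesis using qv_Pl[of "t - j" T j] j by (simp add: X_def b_def Y_def Aq_def)
  qed
  have YZ: "Y j - int (cc j) = Z j" if "j \<in> set [1..<t]" for j
  proof -
    have "1 \<le> t - j" using that by auto
    from qv_Mi[OF this, of T j] show ?thesis by (simp add: Y_def cc_def Z_def)
  qed
  have Ybd: "0 \<le> Y j \<and> Y j \<le> int n" if "j \<in> set [1..<t]" for j
    using lab_bounds[OF lab, of "Pl j (t - j)"] that t by (auto simp: Y_def)
  have Zbd: "0 \<le> Z j" if "j \<in> set [1..<t]" for j
    using lab_bounds[OF lab, of "Mi j (t - j)"] that t by (auto simp: Z_def)
  have Xbd: "0 \<le> X j" if "j \<in> set [1..<t]" for j
  proof (cases "j = t - 1")
    case True then show ?thesis by (simp add: X_def Aq_def)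
  next
    case False
    then show ?thesis using lab_bounds[OF lab, of "Mi j (t - 1 - j)"] that t
      by (auto simp: X_def Aq_def)
  qed
  have B0: "Bq T i (t - 1) = sum_list (map (\<lambda>j. of_bool (X j = int i)) [1..<t])"
    using t by (simp add: Bq_def X_def)
  have Bt: "Bq T i t = of_bool (int m = int i) + sum_list (map (\<lambda>j. of_bool (Z j = int i)) [1..<t])"
  proof -
    have meq: "map (\<lambda>j. of_bool (Aq T t j = int i)) [1..<t] = map (\<lambda>j. of_bool (Z j = int i)) [1..<t]"
      by (rule map_cong[OF refl]) (auto simp: Aq_def Z_def)
    have e: "[1..<t+1] = [1..<t] @ [t]" using t by simp
    show ?thesis unfolding Bq_def e map_append sum_list_append meq
      by (simp add: Aq_def m_def)
  qed
  let ?c = "of_bool (int m = int i) :: nat"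
  have s1: "Lf n i (Bq T i (t - 1)) (cblock2 0 m) = ?c + sum_list (map (\<lambda>j. of_bool (X j = int i)) (rev [1..<t]))"
    using Lf_cblock2[of 0 m n i "Bq T i (t - 1)"] mn i unfolding B0 by (simp add: sum_list_rev_nat)
  have s2: "Lf n i (?c + sum_list (map (\<lambda>j. of_bool (X j = int i)) (rev [1..<t])))
       (concat (map (\<lambda>j. cblock2 (X j) (b j)) (rev [1..<t])))
     = ?c + sum_list (map (\<lambda>j. of_bool (Y j = int i)) [1..<t])"
  proof -
    have eqs: "sum_list (map (\<lambda>j. of_bool (X j + int (b j) = int i)) (rev [1..<t]))
        = (sum_list :: nat list \<Rightarrow> nat) (map (\<lambda>j. of_bool (Y j = int i)) [1..<t])"
    proof -
      have "map (\<lambda>j. of_bool (X j + int (b j) = int i) :: nat) [1..<t] = map (\<lambda>j. of_bool (Y j = int i)) [1..<t]"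
        by (rule map_cong[OF refl]) (simp add: XY)
      then show ?thesis by (simp only: sum_list_rev_nat)
    qed
    have pre: "\<forall>j\<in>set (rev [1..<t]). 0 \<le> X j \<and> X j + int (b j) \<le> int n"
      using Xbd Ybd XY by auto
    show ?thesis using Lf_U[OF pre i, of ?c] unfolding eqs .
  qed
  have s3: "Lf n i (?c + sum_list (map (\<lambda>j. of_bool (Y j = int i)) [1..<t]))
       (concat (map (\<lambda>j. cbar (Y j) (cc j)) [1..<t]))
     = ?c + sum_list (map (\<lambda>j. of_bool (Z j = int i)) [1..<t])"
  proof -
    have meq: "map (\<lambda>j. of_bool (Y j - int (cc j) = int i) :: nat) [1..<t] = map (\<lambda>j. of_bool (Z j = int i)) [1..<t]"
      by (rule map_cong[OF refl]) (simp add: YZ)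
    have pre: "\<forall>j\<in>set [1..<t]. Y j \<le> int n \<and> 0 \<le> Y j - int (cc j)"
      using Ybd YZ Zbd by auto
    show ?thesis using Lf_B[OF pre i, of ?c] unfolding meq .
  qed
  show ?thesis unfolding ow Lf_append s1 s2 s3 Bt ..
qed


lemma pACol_omega: "pACol (omega k T) = concat (map (omega_word T) [1..<k+1])"
proof -
  have "(\<lambda>c. case c of Eps \<Rightarrow> [] | Col u \<Rightarrow> u) \<circ> omega_t T = omega_word T"
    by (rule ext) (simp add: omega_t_def)
  then show ?thesis unfolding pACol_def omega_def by simp
qed

lemma Lf_prefix:
  assumes lab: "n_labelling n k T" and i: "1 \<le> i"
  shows "1 \<le> t \<Longrightarrow> t \<le> k \<Longrightarrow> Lf n i 0 (concat (map (omega_word T) [1..<t+1])) = Bq T i t"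
proof (induction t)
  case 0 then show ?case by simp
next
  case (Suc t)
  show ?case
  proof (cases "t = 0")
    case True
    have "Bq T i 0 = 0" by (simp add: Bq_def)
    then show ?thesis using column_step[OF lab, of 1 i] Suc.prems i True by simp
  next
    case False
    have e: "[1..<Suc t + 1] = [1..<t+1] @ [Suc t]" by simp
    have "Lf n i 0 (concat (map (omega_word T) [1..<t+1])) = Bq T i t"
      using Suc False by simp
    then show ?thesis unfolding e map_append concat_append Lf_append
      using column_step[OF lab, of "Suc t" i] Suc.prems i by simp
  qed
qed

lemma sum_bool_pos: "(0::nat) < sum_list (map (\<lambda>j. of_bool (P j)) xs) \<longleftrightarrow> (\<exists>j\<in>set xs. P j)"
  by (induction xs) auto

theorem corollary5p6:
  fixes k n i :: nat and T :: "vtx \<Rightarrow> nat"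
  assumes "T \<in> GT k n" and "1 \<le> k" and "i \<in> {1..n}"
  shows "fACol_defined n i (omega k T) \<longleftrightarrow> (\<exists>j\<in>{1..k}. int i = qj k T j)"
proof -
  have lab: "n_labelling n k T" using assms(1) by (simp add: GT_def)
  have i: "1 \<le> i" using assms(3) by simp
  have "fACol_defined n i (omega k T) \<longleftrightarrow> 0 < Bq T i k"
    unfolding fACol_defined_def fC_defined pACol_omega
    using Lf_prefix[OF lab i assms(2) order_refl] by simp
  also have "\<dots> \<longleftrightarrow> (\<exists>j\<in>set [1..<k+1]. Aq T k j = int i)"
    unfolding Bq_def by (rule sum_bool_pos)
  also have "\<dots> \<longleftrightarrow> (\<exists>j\<in>{1..k}. int i = qj k T j)"
    by (auto simp: Aq_def qj_def)
  finally show ?thesis .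
qed

end
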